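(* Let $C$ be a complete structured DNNF and $g$ a $\cup$-gate of $C$. The following procedure $\mathrm{Enum}(g)$ enumerates $S(g)$ (possibly with duplicates) with delay $O(\mathrm{depth}(C)\times|S|)$, where $S$ is the produced assignment: traverse, by a naive preorder traversal following wires backwards from $g$ through $\cup$-gates only, the gates $g'\in\downarrow g$ (each $g'$ possibly reached once per path); for each such $g'$, if $g'$ is a var-gate output $S_{\mathrm{var}}(g')$, and if $g'$ is a $\times$-gate with left input $g_L$ and right input $g_R$, then for each $S_L$ output by $\mathrm{Enum}(g_L)$ and each $S_R$ output by $\mathrm{Enum}(g_R)$ (nested, with recursive enumerations run lazily, resuming only when the next value is requested) output $S_L\cup S_R$.
   Context: A set circuit $C=(G,W,\mu)$ is a finite DAG with gates $G$, wires $W\subseteq G\times G$, gate types $\mu(g)\in\{\top,\bot,\mathrm{var},\times,\cup\}$, and an injective map $S_{\mathrm{var}}$ giving each var-gate a set of variables; $C_{\mathrm{var}}$ is the union of all $S_{\mathrm{var}}(g)$. Inputs of $g$ are the $g'$ with $(g',g)\in W$; $\top,\bot,\mathrm{var}$-gates have no inputs, $\times$-gates exactly two, $\cup$-gates at least one, and $\top,\bot$-gates are never inputs. Captured sets: $S(g)=\{S_{\mathrm{var}}(g)\}$ for var-gates, $\emptyset$ for $\bot$, $\{\emptyset\}$ for $\top$, $\{S_1\cup S_2\mid S_1\in S(g_1),S_2\in S(g_2)\}$ for a $\times$-gate with inputs $g_1,g_2$, the union over inputs for $\cup$-gates. Depth is the maximal length of a directed path. For a $\cup$-gate $g$, write $g'\overset{\cup}{\leadsto}g$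 if there is a directed path of wires from $g'$ to $g$ all of whose gates other than $g'$ are $\cup$-gates, and $\downarrow g$ is the set of var- and $\times$-gates $g'$ with $g'\overset{\cup}{\leadsto}g$. A v-tree for $C$ is a binary tree whose leaves are labeled by sets of variables partitioning $C_{\mathrm{var}}$; a structuring function $\sigma$ maps gates to v-tree nodes so that each var-gate $g$ goes to a leaf whose label contains $S_{\mathrm{var}}(g)$, for each wire $(g',g)$ either $\sigma(g')=\sigma(g)$ or $g'$ is a $\cup$-gate with $\sigma(g')$ a child of $\sigma(g)$, and each $\times$-gate $g$ has a left input mapped to the left child and a right input mapped to the right child of $\sigma(g)$. A complete structured DNNF is a set circuit with a v-tree and structuring function. Delay is the maximal time before the first output, between consecutive outputs, and after the last. *)

theory Defs
  imports Main
begin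

datatype gtype = GTop | GBot | GVar | GTimes | GUnion

definition inputs :: "('g \<times> 'g) set \<Rightarrow> 'g \<Rightarrow> 'g set" where
  "inputs W g = {g'. (g', g) \<in> W}"

definition set_circuit ::
  "'g set \<Rightarrow> ('g \<times> 'g) set \<Rightarrow> ('g \<Rightarrow> gtype) \<Rightarrow> ('g \<Rightarrow> 'v set) \<Rightarrow> bool" where
  "set_circuit G W mu Svar \<longleftrightarrow>
     finite G \<and> W \<subseteq> G \<times> G \<and> acyclic W \<and>
     inj_on Svar {g \<in> G. mu g = GVar} \<and>
     (\<forall>g \<in> G. mu g = GVar \<longrightarrow> finite (Svar g)) \<and>
     (\<forall>g \<in> G. mu g \<in> {GTop, GBot, GVar} \<longrightarrow> inputs W g = {}) \<and>
     (\<forall>g \<in> G. mu g = GTimes \<longrightarrow> card (inputs W g) = 2) \<and>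
     (\<forall>g \<in> G. mu g = GUnion \<longrightarrow> inputs W g \<noteq> {}) \<and>
     (\<forall>(g', g) \<in> W. mu g' \<notin> {GTop, GBot})"

definition circuit_vars :: "'g set \<Rightarrow> ('g \<Rightarrow> gtype) \<Rightarrow> ('g \<Rightarrow> 'v set) \<Rightarrow> 'v set" where
  "circuit_vars G mu Svar = (\<Union>g \<in> {g \<in> G. mu g = GVar}. Svar g)"

text \<open>Captured sets S(g) (least fixpoint, which is the recursive definition on a DAG).\<close>
inductive captures ::
  "'g set \<Rightarrow> ('g \<times> 'g) set \<Rightarrow> ('g \<Rightarrow> gtype) \<Rightarrow> ('g \<Rightarrow> 'v set) \<Rightarrow> 'g \<Rightarrow> 'v set \<Rightarrow> bool"
  for G W mu Svar where
  cap_var: "g \<in> G \<Longrightarrow> mu g = GVar \<Longrightarrow> captures G W mu Svar g (Svar g)"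
| cap_top: "g \<in> G \<Longrightarrow> mu g = GTop \<Longrightarrow> captures G W mu Svar g {}"
| cap_times: "g \<in> G \<Longrightarrow> mu g = GTimes \<Longrightarrow> inputs W g = {g1, g2} \<Longrightarrow> g1 \<noteq> g2 \<Longrightarrow>
     captures G W mu Svar g1 S1 \<Longrightarrow> captures G W mu Svar g2 S2 \<Longrightarrow>
     captures G W mu Svar g (S1 \<union> S2)"
| cap_union: "g \<in> G \<Longrightarrow> mu g = GUnion \<Longrightarrow> g' \<in> inputs W g \<Longrightarrow>
     captures G W mu Svar g' S \<Longrightarrow> captures G W mu Svar g S"

definition captured_sets ::
  "'g set \<Rightarrow> ('g \<times> 'g) set \<Rightarrow> ('g \<Rightarrow> gtype) \<Rightarrow> ('g \<Rightarrow> 'v set) \<Rightarrow> 'g \<Rightarrow> 'v set set" where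
  "captured_sets G W mu Svar g = {S. captures G W mu Svar g S}"

definition depth :: "('g \<times> 'g) set \<Rightarrow> nat" where
  "depth W = Max {n. \<exists>a b. (a, b) \<in> W ^^ n}"

datatype 'v vtree = Leaf "'v set" | Node "'v vtree" "'v vtree"

fun subtree_at :: "'v vtree \<Rightarrow> bool list \<Rightarrow> 'v vtree option" where
  "subtree_at T [] = Some T"
| "subtree_at (Node l r) (False # p) = subtree_at l p"
| "subtree_at (Node l r) (True # p) = subtree_at r p"
| "subtree_at (Leaf L) (b # p) = None"

fun leaf_labels :: "'v vtree \<Rightarrow> 'v set list" where
  "leaf_labels (Leaf L) = [L]"
| "leaf_labels (Node l r) = leaf_labels l @ leaf_labels r"

definition is_vtree_for :: "'v vtree \<Rightarrow> 'v set \<Rightarrow> bool" where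
  "is_vtree_for T X \<longleftrightarrow>
     (\<forall>i < length (leaf_labels T). \<forall>j < length (leaf_labels T).
        i \<noteq> j \<longrightarrow> leaf_labels T ! i \<inter> leaf_labels T ! j = {}) \<and>
     \<Union> (set (leaf_labels T)) = X"

definition structuring ::
  "'g set \<Rightarrow> ('g \<times> 'g) set \<Rightarrow> ('g \<Rightarrow> gtype) \<Rightarrow> ('g \<Rightarrow> 'v set) \<Rightarrow> 'v vtree \<Rightarrow> ('g \<Rightarrow> bool list) \<Rightarrow> bool" where
  "structuring G W mu Svar T \<sigma> \<longleftrightarrow>
     (\<forall>g \<in> G. subtree_at T (\<sigma> g) \<noteq> None) \<and>
     (\<forall>g \<in> G. mu g = GVar \<longrightarrow> (\<exists>L. subtree_at T (\<sigma> g) = Some (Leaf L) \<and> Svar g \<subseteq> L)) \<and>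
     (\<forall>(g', g) \<in> W. \<sigma> g' = \<sigma> g \<or>
        (mu g' = GUnion \<and> (\<sigma> g' = \<sigma> g @ [False] \<or> \<sigma> g' = \<sigma> g @ [True]))) \<and>
     (\<forall>g \<in> G. mu g = GTimes \<longrightarrow>
        (\<exists>gL \<in> inputs W g. \<sigma> gL = \<sigma> g @ [False]) \<and>
        (\<exists>gR \<in> inputs W g. \<sigma> gR = \<sigma> g @ [True]))"

definition complete_structured_DNNF ::
  "'g set \<Rightarrow> ('g \<times> 'g) set \<Rightarrow> ('g \<Rightarrow> gtype) \<Rightarrow> ('g \<Rightarrow> 'v set) \<Rightarrow> 'v vtree \<Rightarrow> ('g \<Rightarrow> bool list) \<Rightarrow> bool" where
  "complete_structured_DNNF G W mu Svar T \<sigma> \<longleftrightarrow>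
     set_circuit G W mu Svar \<and> is_vtree_for T (circuit_vars G mu Svar) \<and>
     structuring G W mu Svar T \<sigma>"

text \<open>An execution trace: Tick = one unit of work, Out S = output of the set S.\<close>
datatype 'v ev = Tick | Out "'v set"

text \<open>Nested lazy enumeration at a times-gate: run the left enumeration; for each
  output S_L, run a fresh copy of the right enumeration, replacing each of its outputs
  S_R by the computation of S_L \<union> S_R (cost |S_L|+|S_R|) and its output.\<close>
fun prod_trace :: "'v ev list \<Rightarrow> 'v ev list \<Rightarrow> 'v ev list" where
  "prod_trace [] R = []"
| "prod_trace (Tick # L) R = Tick # prod_trace L R"
| "prod_trace (Out S # L) R =
     concat (map (\<lambda>e. case e of Tick \<Rightarrow> [Tick]
                    | Out T \<Rightarrow> replicate (card S + card T) Tick @ [Out (S \<union> T)]) R)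
     @ prod_trace L R"

text \<open>enum_trace ... g tr: tr is the trace of running the naive traversal from g.
  ins g lists the inputs of a union gate in the order the traversal visits them.
  Each visited gate costs one unit; outputting S_var(g) costs |S_var(g)| units.\<close>
inductive enum_trace ::
  "'g set \<Rightarrow> ('g \<times> 'g) set \<Rightarrow> ('g \<Rightarrow> gtype) \<Rightarrow> ('g \<Rightarrow> 'v set) \<Rightarrow> ('g \<Rightarrow> bool list)
   \<Rightarrow> ('g \<Rightarrow> 'g list) \<Rightarrow> 'g \<Rightarrow> 'v ev list \<Rightarrow> bool"
  for G W mu Svar \<sigma> ins where
  tr_var: "g \<in> G \<Longrightarrow> mu g = GVar \<Longrightarrow>
     enum_trace G W mu Svar \<sigma> ins g (Tick # replicate (card (Svar g)) Tick @ [Out (Svar g)])"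
| tr_times: "g \<in> G \<Longrightarrow> mu g = GTimes \<Longrightarrow>
     gL \<in> inputs W g \<Longrightarrow> \<sigma> gL = \<sigma> g @ [False] \<Longrightarrow>
     gR \<in> inputs W g \<Longrightarrow> \<sigma> gR = \<sigma> g @ [True] \<Longrightarrow>
     enum_trace G W mu Svar \<sigma> ins gL tL \<Longrightarrow> enum_trace G W mu Svar \<sigma> ins gR tR \<Longrightarrow>
     enum_trace G W mu Svar \<sigma> ins g (Tick # prod_trace tL tR)"
| tr_union: "g \<in> G \<Longrightarrow> mu g = GUnion \<Longrightarrow> length ts = length (ins g) \<Longrightarrow>
     (\<forall>i < length ts. enum_trace G W mu Svar \<sigma> ins (ins g ! i) (ts ! i)) \<Longrightarrow>
     enum_trace G W mu Svar \<sigma> ins g (Tick # concat ts)"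

fun outputs :: "'v ev list \<Rightarrow> 'v set list" where
  "outputs [] = []"
| "outputs (Tick # r) = outputs r"
| "outputs (Out S # r) = S # outputs r"

text \<open>gaps tr ! i = number of work units between output i-1 and output i
  (gap 0 = before the first output, last gap = after the last output).\<close>
fun gaps :: "'v ev list \<Rightarrow> nat list" where
  "gaps [] = [0]"
| "gaps (Tick # r) = (let gs = gaps r in Suc (hd gs) # tl gs)"
| "gaps (Out S # r) = 0 # gaps r"

definition adjacent_size :: "'v set list \<Rightarrow> nat \<Rightarrow> nat" where
  "adjacent_size os i =
     (if 0 < i then card (os ! (i - 1)) else 0) + (if i < length os then card (os ! i) else 0)"

end

theory Submission
  imports Defs
begin

definition blk :: "(nat \<times> 'v set) list \<Rightarrow> 'v ev list" where
  "blk bs = concat (map (\<lambda>(k,X). replicate k Tick @ [Out X]) bs)"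

lemma blk_Nil[simp]: "blk [] = []" by (simp add: blk_def)
lemma blk_Cons[simp]: "blk ((k,X)#bs) = replicate k Tick @ Out X # blk bs" by (simp add: blk_def)
lemma blk_append[simp]: "blk (a @ b) = blk a @ blk b" by (simp add: blk_def)
lemma blk_concat: "concat (map blk xs) = blk (concat xs)" by (induction xs) auto

lemma gaps_ne: "gaps r \<noteq> []"
  by (induction r rule: gaps.induct) (auto simp: Let_def)

lemma gaps_rep: "gaps (replicate k Tick @ r) = (hd (gaps r) + k) # tl (gaps r)"
  by (induction k) (auto simp: Let_def gaps_ne)

lemma gaps_blk: "gaps (blk bs) = map fst bs @ [0]"
  by (induction bs) (auto simp: gaps_rep)

lemma outputs_rep: "outputs (replicate k Tick @ r) = outputs r"
  by (induction k) auto

lemma outputs_blk: "outputs (blk bs) = map snd bs"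
  by (induction bs) (auto simp: outputs_rep)

fun addk :: "nat \<Rightarrow> (nat \<times> 'a) list \<Rightarrow> (nat \<times> 'a) list" where
  "addk k [] = []"
| "addk k ((a,b)#r) = (a+k,b)#r"

lemma addk_snd[simp]: "map snd (addk k bs) = map snd bs"
  by (cases "(k,bs)" rule: addk.cases) auto

lemma addk_ne[simp]: "(addk k bs = []) = (bs = [])"
  by (cases "(k,bs)" rule: addk.cases) auto

lemma addk_set: "x \<in> set (addk k bs) \<Longrightarrow> \<exists>y\<in>set bs. snd x = snd y \<and> fst x \<le> fst y + k"
  by (cases "(k,bs)" rule: addk.cases) auto

lemma rep_blk: "bs \<noteq> [] \<Longrightarrow> replicate k Tick @ blk bs = blk (addk k bs)"
  by (cases "(k,bs)" rule: addk.cases) (auto simp: replicate_add[symmetric] add.commute)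

lemma Tick_blk: "bs \<noteq> [] \<Longrightarrow> Tick # blk bs = blk (addk 1 bs)"
  using rep_blk[of bs 1] by simp

lemma pt_rep: "prod_trace (replicate k Tick @ L) R = replicate k Tick @ prod_trace L R"
  by (induction k) auto

lemma concat_map_rep: "concat (map f (replicate k Tick)) = replicate k Tick" if "f Tick = [Tick]"
  using that by (induction k) auto

lemma pt_map: "concat (map (\<lambda>e. case e of Tick \<Rightarrow> [Tick]
                    | Out T \<Rightarrow> replicate (card S + card T) Tick @ [Out (S \<union> T)]) (blk R))
   = blk (map (\<lambda>(k,T). (k + card S + card T, S \<union> T)) R)"
proof (induction R)
  case Nil then show ?case by simp
next
  case (Cons a R)
  obtain k T where a: "a = (k,T)" by force
  show ?case using Cons by (simp add: a concat_map_rep replicate_add)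
qed

fun pb :: "(nat \<times> 'v set) list \<Rightarrow> (nat \<times> 'v set) list \<Rightarrow> (nat \<times> 'v set) list" where
  "pb [] R = []"
| "pb ((k,S)#L) R = addk k (map (\<lambda>(k',T). (k' + card S + card T, S \<union> T)) R) @ pb L R"

lemma pt_blk: "R \<noteq> [] \<Longrightarrow> prod_trace (blk L) (blk R) = blk (pb L R)"
proof (induction L)
  case Nil then show ?case by simp
next
  case (Cons a L)
  obtain k S where a: "a = (k,S)" by force
  have "prod_trace (blk (a#L)) (blk R) = replicate k Tick @ prod_trace (Out S # blk L) (blk R)"
    by (simp add: a pt_rep)
  also have "\<dots> = replicate k Tick @ blk (map (\<lambda>(k,T). (k + card S + card T, S \<union> T)) R) @ blk (pb L R)"
    using Cons by (simp add: pt_map)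
  also have "\<dots> = blk (pb (a#L) R)"
    using Cons.prems by (simp add: a rep_blk[symmetric])
  finally show ?case .
qed

lemma pb_ne: "L \<noteq> [] \<Longrightarrow> R \<noteq> [] \<Longrightarrow> pb L R \<noteq> []"
  by (cases L) auto

lemma pb_set: "x \<in> set (pb L R) \<Longrightarrow> \<exists>y\<in>set L. \<exists>z\<in>set R. snd x = snd y \<union> snd z \<and>
    fst x \<le> fst y + fst z + card (snd y) + card (snd z)"
proof (induction L R rule: pb.induct)
  case (1 R) then show ?case by simp
next
  case (2 k S L R)
  show ?case
  proof (cases "x \<in> set (pb L R)")
    case True
    then obtain y z where "y\<in>set L" "z\<in>set R" "snd x = snd y \<union> snd z \<and>
      fst x \<le> fst y + fst z + card (snd y) + card (snd z)" using 2(1) by blast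
    then show ?thesis by (meson list.set_intros(2))
  next
    case False
    then have "x \<in> set (addk k (map (\<lambda>(k',T). (k' + card S + card T, S \<union> T)) R))"
      using 2(2) by (simp only: pb.simps set_append Un_iff) blast
    then obtain y where y: "y \<in> set (map (\<lambda>(k',T). (k' + card S + card T, S \<union> T)) R)"
      "snd x = snd y" "fst x \<le> fst y + k" using addk_set by blast
    then obtain z where z: "z \<in> set R" "y = (fst z + card S + card (snd z), S \<union> snd z)" by auto
    have "snd x = snd (k,S) \<union> snd z \<and>
      fst x \<le> fst (k,S) + fst z + card (snd (k,S)) + card (snd z)" using y z by simp
    then show ?thesis using z(1) by (meson list.set_intros(1))
  qed
qed

lemma pb_snd: "set (map snd (pb L R)) = {S \<union> T | S T. S \<in> snd ` set L \<and> T \<in> snd ` set R}"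
proof (induction L R rule: pb.induct)
  case (1 R) then show ?case by simp
next
  case (2 k S L R)
  have a: "set (map snd (addk k (map (\<lambda>(k',T). (k' + card S + card T, S \<union> T)) R)))
      = (\<lambda>T. S \<union> T) ` snd ` set R"
  proof -
    have "map snd (map (\<lambda>(k',T). (k' + card S + card T, S \<union> T)) R) = map (\<lambda>T. S \<union> T) (map snd R)"
      by (induction R) auto
    then show ?thesis by (simp only: addk_snd set_map)
  qed
  have "set (map snd (pb ((k,S)#L) R)) = (\<lambda>T. S \<union> T) ` snd ` set R \<union> set (map snd (pb L R))"
    using a by (simp only: pb.simps map_append set_append)
  also have "\<dots> = {S' \<union> T | S' T. S' \<in> snd ` set ((k,S)#L) \<and> T \<in> snd ` set R}"
    unfolding 2 by (simp only: list.set image_insert snd_conv) blast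
  finally show ?case .
qed


lemma subtree_append: "subtree_at t (p @ q) = (case subtree_at t p of None \<Rightarrow> None | Some t' \<Rightarrow> subtree_at t' q)"
proof (induction p arbitrary: t)
  case Nil then show ?case by simp
next
  case (Cons b p)
  show ?case by (cases t; cases b) (simp_all add: Cons)
qed

lemma subtree_labels: "subtree_at t p = Some t' \<Longrightarrow> \<exists>A B. leaf_labels t = A @ leaf_labels t' @ B"
proof (induction t p rule: subtree_at.induct)
  case (1 T)
  then have "leaf_labels T = [] @ leaf_labels t' @ []" by simp
  then show ?case by blast
next
  case (2 l r p)
  then obtain A B where "leaf_labels l = A @ leaf_labels t' @ B" by auto
  then have "leaf_labels (Node l r) = A @ leaf_labels t' @ (B @ leaf_labels r)" by simp
  then show ?case by blast
next
  case (3 l r p)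
  then obtain A B where "leaf_labels r = A @ leaf_labels t' @ B" by auto
  then have "leaf_labels (Node l r) = (leaf_labels l @ A) @ leaf_labels t' @ B" by simp
  then show ?case by blast
next
  case (4 L b p)
  then show ?case by simp
qed

definition Vt :: "'v vtree \<Rightarrow> bool list \<Rightarrow> 'v set" where
  "Vt T p = (case subtree_at T p of None \<Rightarrow> {} | Some t \<Rightarrow> \<Union> (set (leaf_labels t)))"

lemma Vt_child: "Vt T (p @ [b]) \<subseteq> Vt T p"
proof (cases "subtree_at T p")
  case None then show ?thesis by (simp add: Vt_def subtree_append)
next
  case (Some t)
  then show ?thesis by (cases t; cases b) (auto simp: Vt_def subtree_append)
qed

lemma Vt_disj:
  assumes "\<forall>i < length (leaf_labels T). \<forall>j < length (leaf_labels T).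
        i \<noteq> j \<longrightarrow> leaf_labels T ! i \<inter> leaf_labels T ! j = {}"
  shows "Vt T (p @ [False]) \<inter> Vt T (p @ [True]) = {}"
proof (cases "subtree_at T p")
  case None then show ?thesis by (simp add: Vt_def subtree_append)
next
  case (Some t)
  show ?thesis
  proof (cases t)
    case (Leaf x) then show ?thesis using Some by (simp add: Vt_def subtree_append)
  next
    case (Node l r)
    obtain A B where AB: "leaf_labels T = A @ leaf_labels l @ leaf_labels r @ B"
      using subtree_labels[OF Some] Node by auto
    have "False" if x1: "x \<in> \<Union> (set (leaf_labels l))" and x2: "x \<in> \<Union> (set (leaf_labels r))" for x
    proof -
      obtain i where i: "i < length (leaf_labels l)" "x \<in> leaf_labels l ! i"
        using x1 by (auto simp: in_set_conv_nth)
      obtain j where j: "j < length (leaf_labels r)" "x \<in> leaf_labels r ! j"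
        using x2 by (auto simp: in_set_conv_nth)
      have "leaf_labels T ! (length A + i) = leaf_labels l ! i"
        using i AB by (simp add: nth_append)
      moreover have "leaf_labels T ! (length A + length (leaf_labels l) + j) = leaf_labels r ! j"
        using j AB by (simp add: nth_append)
      moreover have "length A + i < length (leaf_labels T)" "length A + length (leaf_labels l) + j < length (leaf_labels T)"
        using i j AB by auto
      moreover have "length A + i \<noteq> length A + length (leaf_labels l) + j" using i by linarith
      ultimately have "leaf_labels l ! i \<inter> leaf_labels r ! j = {}" using assms by metis
      then show False using i j by blast
    qed
    then show ?thesis using Some Node by (auto simp: Vt_def subtree_append)
  qed
qed


locale dn =
  fixes G :: "'g set" and W :: "('g \<times> 'g) set" and mu :: "'g \<Rightarrow> gtype"
    and Svar :: "'g \<Rightarrow> 'v set" and T :: "'v vtree" and \<sigma> :: "'g \<Rightarrow> bool list"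
    and ins :: "'g \<Rightarrow> 'g list"
  assumes cs: "complete_structured_DNNF G W mu Svar T \<sigma>"
  and insA: "\<forall>h\<in>G. mu h = GUnion \<longrightarrow> set (ins h) = inputs W h \<and> distinct (ins h)"
begin

lemma sc: "set_circuit G W mu Svar" using cs by (simp add: complete_structured_DNNF_def)
lemma st: "structuring G W mu Svar T \<sigma>" using cs by (simp add: complete_structured_DNNF_def)
lemma vt: "is_vtree_for T (circuit_vars G mu Svar)" using cs by (simp add: complete_structured_DNNF_def)
lemma finG: "finite G" using sc by (simp add: set_circuit_def)
lemma WG: "W \<subseteq> G \<times> G" using sc by (simp add: set_circuit_def)
lemma acyc: "acyclic W" using sc by (simp add: set_circuit_def)
lemma inputs_W: "g' \<in> inputs W g \<longleftrightarrow> (g',g) \<in> W" by (simp add: inputs_def)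

lemma wire_sigma: "(g',g) \<in> W \<Longrightarrow> \<sigma> g' = \<sigma> g \<or> \<sigma> g' = \<sigma> g @ [False] \<or> \<sigma> g' = \<sigma> g @ [True]"
  using st unfolding structuring_def by fast

definition Ep where "Ep p = {h \<in> G. mu h = GVar \<and> Svar h = {} \<and> (\<exists>q. \<sigma> h = p @ q)}"
definition e where "e p = card (Ep p)"

lemma Ep_fin: "finite (Ep p)" using finG by (simp add: Ep_def)

lemma Ep_child: "Ep (p @ [b]) \<subseteq> Ep p" by (auto simp: Ep_def)

lemma e_child: "e (p @ [b]) \<le> e p"
  unfolding e_def by (rule card_mono[OF Ep_fin Ep_child])

lemma e_split: "e (p @ [False]) + e (p @ [True]) \<le> e p"
proof -
  have "Ep (p @ [False]) \<inter> Ep (p @ [True]) = {}" by (auto simp: Ep_def)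
  then have "e (p @ [False]) + e (p @ [True]) = card (Ep (p @ [False]) \<union> Ep (p @ [True]))"
    unfolding e_def by (simp add: card_Un_disjoint Ep_fin)
  also have "\<dots> \<le> e p" unfolding e_def by (rule card_mono[OF Ep_fin]) (use Ep_child in blast)
  finally show ?thesis .
qed

lemma e_le1: "e p \<le> 1"
proof -
  have inj: "inj_on Svar {g \<in> G. mu g = GVar}" using sc by (simp add: set_circuit_def)
  have "\<forall>a\<in>Ep p. \<forall>b\<in>Ep p. a = b"
  proof (intro ballI)
    fix a b assume "a \<in> Ep p" "b \<in> Ep p"
    then show "a = b" using inj unfolding Ep_def inj_on_def by auto
  qed
  then show ?thesis unfolding e_def using card_le_Suc0_iff_eq[OF Ep_fin] by simp
qed

lemma e_self: "g \<in> G \<Longrightarrow> mu g = GVar \<Longrightarrow> Svar g = {} \<Longrightarrow> 1 \<le> e (\<sigma> g)"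
proof -
  assume "g \<in> G" "mu g = GVar" "Svar g = {}"
  then have "g \<in> Ep (\<sigma> g)" unfolding Ep_def by auto
  then have "Ep (\<sigma> g) \<noteq> {}" by blast
  then show ?thesis unfolding e_def using Ep_fin by (simp add: Suc_le_eq card_gt_0_iff)
qed

abbreviation V where "V p \<equiv> Vt T p"

lemma wire_mono: "(c,g) \<in> W \<Longrightarrow> V (\<sigma> c) \<subseteq> V (\<sigma> g) \<and> e (\<sigma> c) \<le> e (\<sigma> g)"
proof -
  assume "(c,g) \<in> W"
  then consider "\<sigma> c = \<sigma> g" | b where "\<sigma> c = \<sigma> g @ [b]" using wire_sigma[of c g] by blast
  then show ?thesis
  proof cases
    case 1 then show ?thesis by simp
  next
    case 2 then show ?thesis using Vt_child[of T "\<sigma> g" b] e_child[of "\<sigma> g" b] by simp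
  qed
qed

lemma disj: "V (p @ [False]) \<inter> V (p @ [True]) = {}"
  using vt Vt_disj unfolding is_vtree_for_def by blast

definition bnd where "bnd g h \<longleftrightarrow> (\<forall>a n. (a,g) \<in> W ^^ n \<longrightarrow> n \<le> h)"

lemma bnd_child: "bnd g h \<Longrightarrow> (g',g) \<in> W \<Longrightarrow> 1 \<le> h \<and> bnd g' (h - 1)"
proof -
  assume b: "bnd g h" and w: "(g',g) \<in> W"
  have "(g',g) \<in> W ^^ 1" using w by simp
  then have h1: "1 \<le> h" using b unfolding bnd_def by blast
  have "n \<le> h - 1" if "(a,g') \<in> W ^^ n" for a n
  proof -
    have "(a,g) \<in> W ^^ Suc n" using relpow_Suc_I[OF that w] .
    then have "Suc n \<le> h" using b unfolding bnd_def by blast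
    then show ?thesis by simp
  qed
  then show ?thesis using h1 unfolding bnd_def by blast
qed

lemma times_inputs:
  assumes "g \<in> G" "mu g = GTimes" "gL \<in> inputs W g" "gR \<in> inputs W g" "gL \<noteq> gR"
  shows "inputs W g = {gL, gR}"
proof -
  have c2: "card (inputs W g) = 2" using sc assms(1,2) unfolding set_circuit_def by blast
  have fin: "finite (inputs W g)"
    by (rule finite_subset[OF _ finG]) (use WG in \<open>auto simp: inputs_def\<close>)
  have sub: "{gL, gR} \<subseteq> inputs W g" using assms by blast
  have "card {gL, gR} = 2" using assms(5) by simp
  then show ?thesis using card_subset_eq[OF fin sub] c2 by simp
qed

end


context dn
begin

abbreviation ET where "ET \<equiv> enum_trace G W mu Svar \<sigma> ins"

definition good where
  "good g x \<longleftrightarrow> finite (snd x) \<and> snd x \<subseteq> V (\<sigma> g) \<and> (snd x \<noteq> {} \<or> 1 \<le> e (\<sigma> g)) \<and>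
     captures G W mu Svar g (snd x) \<and>
     (\<forall>h. bnd g h \<longrightarrow> fst x \<le> (2*h+2) * (card (snd x) + e (\<sigma> g)))"

lemma inv: "ET g tr \<Longrightarrow> \<exists>bs. tr = blk bs \<and> bs \<noteq> [] \<and> (\<forall>x\<in>set bs. good g x)"
proof (induction rule: enum_trace.induct)
  case (tr_var g)
  let ?S = "Svar g"
  let ?c = "card ?S"
  have tr: "Tick # replicate ?c Tick @ [Out ?S] = blk [(Suc ?c, ?S)]" by simp
  have fin: "finite ?S" using sc tr_var unfolding set_circuit_def by blast
  obtain L where L: "subtree_at T (\<sigma> g) = Some (Leaf L)" "?S \<subseteq> L"
    using st tr_var unfolding structuring_def by blast
  have sub: "?S \<subseteq> V (\<sigma> g)" using L by (simp add: Vt_def)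
  have ne: "?S \<noteq> {} \<or> 1 \<le> e (\<sigma> g)" using e_self tr_var by blast
  then have ne': "1 \<le> ?c + e (\<sigma> g)" using fin by (auto simp: Suc_le_eq card_gt_0_iff)
  have cap: "captures G W mu Svar g ?S" using tr_var by (rule cap_var)
  have bd: "Suc ?c \<le> (2*h+2) * (?c + e (\<sigma> g))" for h
  proof -
    have "2*(?c + e (\<sigma> g)) \<le> (2*h+2) * (?c + e (\<sigma> g))" by (rule mult_right_mono) simp_all
    moreover have "Suc ?c \<le> 2*(?c + e (\<sigma> g))" using ne' by simp
    ultimately show ?thesis by (rule le_trans[rotated])
  qed
  show ?case
    by (rule exI[of _ "[(Suc ?c, ?S)]"]) (use tr fin sub ne cap bd in \<open>auto simp: good_def\<close>)
next
  case (tr_times g gL gR tL tR)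
  obtain bL where bL: "tL = blk bL" "bL \<noteq> []" "\<forall>x\<in>set bL. good gL x" using tr_times.IH(1) by blast
  obtain bR where bR: "tR = blk bR" "bR \<noteq> []" "\<forall>x\<in>set bR. good gR x" using tr_times.IH(2) by blast
  let ?bs = "addk 1 (pb bL bR)"
  have tr: "Tick # prod_trace tL tR = blk ?bs"
    using bL bR pt_blk Tick_blk pb_ne by metis
  have ne: "?bs \<noteq> []" using pb_ne bL bR by simp
  have wL: "(gL, g) \<in> W" and wR: "(gR, g) \<in> W" using tr_times inputs_W by auto
  have neq: "gL \<noteq> gR" using tr_times by auto
  have inp: "inputs W g = {gL, gR}" using times_inputs tr_times neq by blast
  have dj: "V (\<sigma> gL) \<inter> V (\<sigma> gR) = {}" using disj tr_times by simp
  have eLR: "e (\<sigma> gL) + e (\<sigma> gR) \<le> e (\<sigma> g)" using e_split tr_times by simp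
  have vL: "V (\<sigma> gL) \<subseteq> V (\<sigma> g)" and vR: "V (\<sigma> gR) \<subseteq> V (\<sigma> g)"
    using wire_mono wL wR by auto
  have eL: "e (\<sigma> gL) \<le> e (\<sigma> g)" using eLR by simp
  have "good g x" if x: "x \<in> set ?bs" for x
  proof -
    obtain x' where x': "x' \<in> set (pb bL bR)" "snd x = snd x'" "fst x \<le> fst x' + 1"
      using addk_set[OF x] by blast
    obtain y z where yz: "y \<in> set bL" "z \<in> set bR" "snd x' = snd y \<union> snd z"
      "fst x' \<le> fst y + fst z + card (snd y) + card (snd z)" using pb_set[OF x'(1)] by blast
    have gy: "good gL y" and gz: "good gR z" using yz bL bR by auto
    have fin: "finite (snd x)" using gy gz x' yz by (simp add: good_def)
    have sub: "snd x \<subseteq> V (\<sigma> g)" using gy gz x' yz vL vR by (auto simp: good_def)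
    have nem: "snd x \<noteq> {} \<or> 1 \<le> e (\<sigma> g)" using gy x' yz eL by (auto simp: good_def)
    have cap: "captures G W mu Svar g (snd x)"
    proof -
      have cy: "captures G W mu Svar gL (snd y)" using gy by (simp add: good_def)
      have cz: "captures G W mu Svar gR (snd z)" using gz by (simp add: good_def)
      show ?thesis unfolding x'(2) yz(3) using tr_times(1,2) inp neq cy cz by (rule cap_times)
    qed
    have dyz: "snd y \<inter> snd z = {}" using gy gz dj by (auto simp: good_def)
    have card: "card (snd x) = card (snd y) + card (snd z)"
      using x' yz dyz gy gz by (simp add: good_def card_Un_disjoint)
    have w1: "1 \<le> card (snd x) + e (\<sigma> g)" using nem fin by (auto simp: Suc_le_eq card_gt_0_iff)
    have bd: "fst x \<le> (2*h+2) * (card (snd x) + e (\<sigma> g))" if b: "bnd g h" for h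
    proof -
      have h1: "1 \<le> h" and bL': "bnd gL (h-1)" and bR': "bnd gR (h-1)"
        using bnd_child[OF b wL] bnd_child[OF b wR] by auto
      have k: "2*(h-1)+2 = 2*h" using h1 by simp
      have fy: "fst y \<le> (2*h) * (card (snd y) + e (\<sigma> gL))" using gy bL' k by (metis good_def)
      have fz: "fst z \<le> (2*h) * (card (snd z) + e (\<sigma> gR))" using gz bR' k by (metis good_def)
      have "(2*h) * (card (snd y) + e (\<sigma> gL)) + (2*h) * (card (snd z) + e (\<sigma> gR))
          = (2*h) * (card (snd y) + card (snd z) + (e (\<sigma> gL) + e (\<sigma> gR)))"
        by (simp add: algebra_simps)
      also have "\<dots> \<le> (2*h) * (card (snd x) + e (\<sigma> g))"
        using card eLR by (intro mult_left_mono) simp_all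
      finally have s: "fst y + fst z \<le> (2*h) * (card (snd x) + e (\<sigma> g))" using fy fz by linarith
      define A where "A = card (snd x) + e (\<sigma> g)"
      define B where "B = (2*h) * A"
      have eq: "(2*h+2) * A = B + 2 * A" by (simp add: B_def algebra_simps)
      have s': "fst y + fst z \<le> B" using s by (simp add: A_def B_def)
      have "card (snd y) + card (snd z) \<le> A" "1 \<le> A" using card w1 by (simp_all add: A_def)
      then have "fst x \<le> B + 2 * A" using s' x' yz by linarith
      then show ?thesis using eq by (simp add: A_def)
    qed
    show ?thesis using fin sub nem cap bd by (simp add: good_def)
  qed
  then show ?case using tr ne by blast
next
  case (tr_union g ts)
  have "\<forall>i. \<exists>bs. i < length ts \<longrightarrow> ts ! i = blk bs \<and> bs \<noteq> [] \<and> (\<forall>x\<in>set bs. good (ins g ! i) x)"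
    using tr_union.IH by blast
  then obtain f where f: "\<And>i. i < length ts \<Longrightarrow> ts ! i = blk (f i) \<and> f i \<noteq> [] \<and> (\<forall>x\<in>set (f i). good (ins g ! i) x)"
    by metis
  let ?n = "length ts"
  have ts: "ts = map (\<lambda>i. blk (f i)) [0..<?n]"
    by (rule nth_equalityI) (simp_all add: f)
  have cc: "concat ts = blk (concat (map f [0..<?n]))"
    by (subst ts) (simp add: blk_concat[symmetric] comp_def)
  have insg: "set (ins g) = inputs W g" using insA tr_union by blast
  have "inputs W g \<noteq> {}" using sc tr_union unfolding set_circuit_def by blast
  then have n0: "0 < ?n" using insg tr_union by (cases "ins g") auto
  have ne0: "concat (map f [0..<?n]) \<noteq> []"
    using f[OF n0] n0 by (auto simp: upt_conv_Cons)
  let ?bs = "addk 1 (concat (map f [0..<?n]))"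
  have tr: "Tick # concat ts = blk ?bs" unfolding cc by (rule Tick_blk[OF ne0])
  have ne: "?bs \<noteq> []" using ne0 by simp
  have "good g x" if x: "x \<in> set ?bs" for x
  proof -
    obtain y where y: "y \<in> set (concat (map f [0..<?n]))" "snd x = snd y" "fst x \<le> fst y + 1"
      using addk_set[OF x] by blast
    then obtain i where i: "i < ?n" "y \<in> set (f i)" by auto
    let ?c = "ins g ! i"
    have gy: "good ?c y" using f i by blast
    have "?c \<in> inputs W g" using insg i tr_union by (metis nth_mem)
    then have wc: "(?c, g) \<in> W" using inputs_W by blast
    have vm: "V (\<sigma> ?c) \<subseteq> V (\<sigma> g)" and em: "e (\<sigma> ?c) \<le> e (\<sigma> g)" using wire_mono[OF wc] by auto
    have fin: "finite (snd x)" using gy y by (simp add: good_def)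
    have sub: "snd x \<subseteq> V (\<sigma> g)" using gy y vm by (auto simp: good_def)
    have nem: "snd x \<noteq> {} \<or> 1 \<le> e (\<sigma> g)" using gy y em by (auto simp: good_def)
    have cap: "captures G W mu Svar g (snd x)"
    proof -
      have cy: "captures G W mu Svar ?c (snd y)" using gy by (simp add: good_def)
      show ?thesis unfolding y(2) using tr_union(1,2) \<open>?c \<in> inputs W g\<close> cy by (rule cap_union)
    qed
    have w1: "1 \<le> card (snd x) + e (\<sigma> g)" using nem fin by (auto simp: Suc_le_eq card_gt_0_iff)
    have bd: "fst x \<le> (2*h+2) * (card (snd x) + e (\<sigma> g))" if b: "bnd g h" for h
    proof -
      have h1: "1 \<le> h" and bc: "bnd ?c (h-1)" using bnd_child[OF b wc] by auto
      have k: "2*(h-1)+2 = 2*h" using h1 by simp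
      have fy: "fst y \<le> (2*h) * (card (snd y) + e (\<sigma> ?c))" using gy bc k by (metis good_def)
      also have "\<dots> \<le> (2*h) * (card (snd x) + e (\<sigma> g))"
        using y em by (intro mult_left_mono) simp_all
      finally have s: "fst y \<le> (2*h) * (card (snd x) + e (\<sigma> g))" .
      define A where "A = card (snd x) + e (\<sigma> g)"
      define B where "B = (2*h) * A"
      have eq: "(2*h+2) * A = B + 2 * A" by (simp add: B_def algebra_simps)
      have s': "fst y \<le> B" using s by (simp add: A_def B_def)
      have "1 \<le> A" using w1 by (simp add: A_def)
      then have "fst x \<le> B + 2 * A" using s' y by linarith
      then show ?thesis using eq by (simp add: A_def)
    qed
    show ?thesis using fin sub nem cap bd by (simp add: good_def)
  qed
  then show ?case using tr ne by blast
qed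

end


lemma outputs_append: "outputs (a @ b) = outputs a @ outputs b"
  by (induction a rule: outputs.induct) auto

lemma outputs_concat: "outputs (concat ts) = concat (map outputs ts)"
  by (induction ts) (auto simp: outputs_append)

context dn
begin

lemma inv_var: "ET g tr \<Longrightarrow> mu g = GVar \<Longrightarrow> tr = Tick # replicate (card (Svar g)) Tick @ [Out (Svar g)]"
  by (erule enum_trace.cases) auto

lemma inv_top: "ET g tr \<Longrightarrow> mu g \<noteq> GTop"
  by (erule enum_trace.cases) auto

lemma inv_times: "ET g tr \<Longrightarrow> mu g = GTimes \<Longrightarrow> \<exists>gL gR tL tR. gL \<in> inputs W g \<and> \<sigma> gL = \<sigma> g @ [False] \<and>
   gR \<in> inputs W g \<and> \<sigma> gR = \<sigma> g @ [True] \<and> ET gL tL \<and> ET gR tR \<and> tr = Tick # prod_trace tL tR"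
  by (erule enum_trace.cases) auto

lemma inv_union: "ET g tr \<Longrightarrow> mu g = GUnion \<Longrightarrow> \<exists>ts. tr = Tick # concat ts \<and> length ts = length (ins g) \<and>
   (\<forall>i<length ts. ET (ins g ! i) (ts ! i))"
  by (erule enum_trace.cases) auto

lemma outs_sub: "ET g tr \<Longrightarrow> set (outputs tr) \<subseteq> captured_sets G W mu Svar g"
proof -
  assume "ET g tr"
  then obtain bs where "tr = blk bs" "\<forall>x\<in>set bs. good g x" using inv by blast
  then show ?thesis by (auto simp: outputs_blk captured_sets_def good_def)
qed

lemma cap_out: "captures G W mu Svar g X \<Longrightarrow> ET g tr \<Longrightarrow> X \<in> set (outputs tr)"
proof (induction arbitrary: tr rule: captures.induct)
  case (cap_var g)
  then have "tr = Tick # replicate (card (Svar g)) Tick @ [Out (Svar g)]" using inv_var by blast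
  then show ?case by (simp add: outputs_rep)
next
  case (cap_top g)
  then show ?case using inv_top by blast
next
  case (cap_times g g1 g2 S1 S2)
  obtain gL gR tL tR where t: "gL \<in> inputs W g" "\<sigma> gL = \<sigma> g @ [False]"
   "gR \<in> inputs W g" "\<sigma> gR = \<sigma> g @ [True]" "ET gL tL" "ET gR tR" "tr = Tick # prod_trace tL tR"
    using inv_times[OF cap_times.prems cap_times.hyps(2)] by blast
  have neq: "gL \<noteq> gR" using t by auto
  have inp: "{g1, g2} = {gL, gR}" using times_inputs[OF cap_times.hyps(1,2) t(1,3) neq] cap_times.hyps(3) by simp
  obtain bL where bL: "tL = blk bL" "bL \<noteq> []" using inv[OF t(5)] by blast
  obtain bR where bR: "tR = blk bR" "bR \<noteq> []" using inv[OF t(6)] by blast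
  have o: "set (outputs tr) = {S \<union> T | S T. S \<in> snd ` set bL \<and> T \<in> snd ` set bR}"
    using t(7) bL bR by (simp add: pt_blk outputs_blk pb_snd[symmetric])
  have oL: "set (outputs tL) = snd ` set bL" and oR: "set (outputs tR) = snd ` set bR"
    using bL bR by (simp_all add: outputs_blk)
  from inp cap_times.hyps(4) have "(g1 = gL \<and> g2 = gR) \<or> (g1 = gR \<and> g2 = gL)" by (metis doubleton_eq_iff)
  then show ?case
  proof
    assume h: "g1 = gL \<and> g2 = gR"
    have "S1 \<in> set (outputs tL)" using cap_times.IH(1) t(5) h by simp
    moreover have "S2 \<in> set (outputs tR)" using cap_times.IH(2) t(6) h by simp
    ultimately have "S1 \<in> snd ` set bL" "S2 \<in> snd ` set bR" using oL oR by auto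
    then show ?thesis using o by blast
  next
    assume h: "g1 = gR \<and> g2 = gL"
    have "S1 \<in> set (outputs tR)" using cap_times.IH(1) t(6) h by simp
    moreover have "S2 \<in> set (outputs tL)" using cap_times.IH(2) t(5) h by simp
    ultimately have "S2 \<in> snd ` set bL" "S1 \<in> snd ` set bR" using oL oR by auto
    then have "S2 \<union> S1 \<in> set (outputs tr)" using o by blast
    then show ?thesis by (simp add: Un_commute)
  qed
next
  case (cap_union g g' S)
  obtain ts where ts: "tr = Tick # concat ts" "length ts = length (ins g)"
    "\<forall>i<length ts. ET (ins g ! i) (ts ! i)"
    using inv_union[OF cap_union.prems cap_union.hyps(2)] by blast
  have "set (ins g) = inputs W g" using insA cap_union.hyps(1,2) by blast
  then obtain i where i: "i < length (ins g)" "ins g ! i = g'" using cap_union.hyps(3)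
    by (metis in_set_conv_nth)
  then have "S \<in> set (outputs (ts ! i))" using cap_union.IH ts by auto
  moreover have "ts ! i \<in> set ts" using i ts by simp
  ultimately show ?case using ts by (auto simp: outputs_concat)
qed

lemma finW: "finite W" by (rule finite_subset[OF WG]) (simp add: finG)

lemma wfW: "wf W" using finite_acyclic_wf[OF finW acyc] .

lemma ex_tr: "g \<in> G \<longrightarrow> mu g \<notin> {GTop, GBot} \<longrightarrow> (\<exists>tr. ET g tr)"
proof (induction g rule: wf_induct[OF wfW])
  case (1 g)
  show ?case
  proof (intro impI)
    assume gG: "g \<in> G" and nt: "mu g \<notin> {GTop, GBot}"
    have child: "\<exists>t. ET c t" if cw: "(c, g) \<in> W" for c
    proof -
      have cG: "c \<in> G" using cw WG by auto
      have "\<forall>(g', g) \<in> W. mu g' \<notin> {GTop, GBot}" using sc unfolding set_circuit_def by blast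
      then have cn: "mu c \<notin> {GTop, GBot}" using cw by blast
      have "c \<in> G \<longrightarrow> mu c \<notin> {GTop, GBot} \<longrightarrow> (\<exists>tr. ET c tr)" using 1 cw by blast
      then show ?thesis using cG cn by blast
    qed
    consider "mu g = GVar" | "mu g = GTimes" | "mu g = GUnion" using nt by (cases "mu g") auto
    then show "\<exists>tr. ET g tr"
    proof cases
      case 1 then show ?thesis using tr_var[OF gG] by blast
    next
      case 2
      obtain gL gR where g: "gL \<in> inputs W g" "\<sigma> gL = \<sigma> g @ [False]"
        "gR \<in> inputs W g" "\<sigma> gR = \<sigma> g @ [True]"
        using st gG 2 unfolding structuring_def by blast
      obtain tL where tL: "ET gL tL" using child g(1) inputs_W by blast
      obtain tR where tR: "ET gR tR" using child g(3) inputs_W by blast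
      show ?thesis using tr_times[OF gG 2 g(1,2,3,4) tL tR] by blast
    next
      case 3
      have "\<forall>i. \<exists>t. i < length (ins g) \<longrightarrow> ET (ins g ! i) t"
      proof
        fix i
        show "\<exists>t. i < length (ins g) \<longrightarrow> ET (ins g ! i) t"
        proof (cases "i < length (ins g)")
          case True
          have "set (ins g) = inputs W g" using insA gG 3 by blast
          then have "ins g ! i \<in> inputs W g" using True by (metis nth_mem)
          then have "\<exists>t. ET (ins g ! i) t" using child inputs_W by blast
          then show ?thesis by blast
        next
          case False then show ?thesis by blast
        qed
      qed
      then obtain f where f: "\<And>i. i < length (ins g) \<Longrightarrow> ET (ins g ! i) (f i)" by metis
      let ?ts = "map f [0..<length (ins g)]"
      have all: "\<forall>i<length ?ts. ET (ins g ! i) (?ts ! i)" using f by simp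
      have len: "length ?ts = length (ins g)" by simp
      have "ET g (Tick # concat ?ts)" by (rule tr_union) (rule gG, rule 3, rule len, rule all)
      then show ?thesis by blast
    qed
  qed
qed

lemma relpow_bound: "(a, b) \<in> W ^^ n \<Longrightarrow> n \<le> card G"
proof -
  assume "(a, b) \<in> W ^^ n"
  then obtain f where f: "f 0 = a" "f n = b" "\<forall>i<n. (f i, f (Suc i)) \<in> W"
    using relpow_fun_conv by metis
  show ?thesis
  proof (cases n)
    case 0 then show ?thesis by simp
  next
    case (Suc m)
    have path: "i < j \<Longrightarrow> j \<le> n \<Longrightarrow> (f i, f j) \<in> W\<^sup>+" for i j
    proof (induction j)
      case 0 then show ?case by simp
    next
      case (Suc j)
      have w: "(f j, f (Suc j)) \<in> W" using f Suc.prems by simp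
      show ?case
      proof (cases "i = j")
        case True then show ?thesis using w by auto
      next
        case False
        then have "(f i, f j) \<in> W\<^sup>+" using Suc by simp
        then show ?thesis using w by (rule trancl_into_trancl)
      qed
    qed
    have inj: "inj_on f {0..n}"
    proof (rule inj_onI)
      fix i j assume ij: "i \<in> {0..n}" "j \<in> {0..n}" "f i = f j"
      show "i = j"
      proof (rule ccontr)
        assume "i \<noteq> j"
        then have "i < j \<or> j < i" by arith
        then have "(f i, f i) \<in> W\<^sup>+ \<or> (f j, f j) \<in> W\<^sup>+"
          using path[of i j] path[of j i] ij by auto
        then show False using acyc unfolding acyclic_def by blast
      qed
    qed
    have sub: "f ` {0..n} \<subseteq> G"
    proof
      fix x assume "x \<in> f ` {0..n}"
      then obtain i where i: "i \<le> n" "x = f i" by auto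
      show "x \<in> G"
      proof (cases "i < n")
        case True then show ?thesis using f i WG by auto
      next
        case False
        then have "i = Suc m" using i Suc by simp
        then show ?thesis using f(3) Suc i WG by auto
      qed
    qed
    have "card {0..n} \<le> card G" using card_inj_on_le[OF inj sub finG] .
    then show ?thesis by simp
  qed
qed

lemma depth_fin: "finite {n. \<exists>a b. (a, b) \<in> W ^^ n}"
  by (rule finite_subset[of _ "{..card G}"]) (auto dest: relpow_bound)

lemma bnd_depth: "bnd g (depth W)"
  unfolding bnd_def depth_def using depth_fin by (auto intro: Max_ge)

lemma depth_pos: "(g', g) \<in> W \<Longrightarrow> 1 \<le> depth W"
proof -
  assume "(g', g) \<in> W"
  then have "(g', g) \<in> W ^^ 1" by simp
  then have "1 \<in> {n. \<exists>a b. (a, b) \<in> W ^^ n}" by blast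
  then show ?thesis unfolding depth_def using depth_fin by (rule Max_ge[rotated])
qed

end


theorem proposition4p2:
  "\<exists>c :: nat. \<forall>G W mu (Svar :: 'g \<Rightarrow> 'v set) T \<sigma> (ins :: 'g \<Rightarrow> 'g list) g.
     complete_structured_DNNF G W mu Svar T \<sigma> \<longrightarrow>
     (\<forall>h \<in> G. mu h = GUnion \<longrightarrow> set (ins h) = inputs W h \<and> distinct (ins h)) \<longrightarrow>
     g \<in> G \<longrightarrow> mu g = GUnion \<longrightarrow>
     (\<exists>tr. enum_trace G W mu Svar \<sigma> ins g tr) \<and>
     (\<forall>tr. enum_trace G W mu Svar \<sigma> ins g tr \<longrightarrow>
        set (outputs tr) = captured_sets G W mu Svar g \<and>
        (\<forall>i < length (gaps tr).
           gaps tr ! i \<le> c * depth W * (adjacent_size (outputs tr) i + 1)))"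
proof (rule exI[of _ 4], intro allI impI)
  fix G W mu T \<sigma> g and Svar :: "'g \<Rightarrow> 'v set" and ins :: "'g \<Rightarrow> 'g list"
  assume cs: "complete_structured_DNNF G W mu Svar T \<sigma>"
    and insA: "\<forall>h \<in> G. mu h = GUnion \<longrightarrow> set (ins h) = inputs W h \<and> distinct (ins h)"
    and gG: "g \<in> G" and gu: "mu g = GUnion"
  interpret dn G W mu Svar T \<sigma> ins using cs insA by unfold_locales
  have ex: "\<exists>tr. enum_trace G W mu Svar \<sigma> ins g tr" using ex_tr gG gu by simp
  have D1: "1 \<le> depth W"
  proof -
    have "inputs W g \<noteq> {}" using sc gG gu unfolding set_circuit_def by blast
    then obtain g' where "(g', g) \<in> W" using inputs_W by blast
    then show ?thesis by (rule depth_pos)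
  qed
  have main: "set (outputs tr) = captured_sets G W mu Svar g \<and>
        (\<forall>i < length (gaps tr).
           gaps tr ! i \<le> 4 * depth W * (adjacent_size (outputs tr) i + 1))"
    if et: "enum_trace G W mu Svar \<sigma> ins g tr" for tr
  proof
    show "set (outputs tr) = captured_sets G W mu Svar g"
      using outs_sub[OF et] cap_out[OF _ et] by (auto simp: captured_sets_def)
    obtain bs where bs: "tr = blk bs" "\<forall>x\<in>set bs. good g x" using inv[OF et] by blast
    show "\<forall>i < length (gaps tr). gaps tr ! i \<le> 4 * depth W * (adjacent_size (outputs tr) i + 1)"
    proof (intro allI impI)
      fix i assume i: "i < length (gaps tr)"
      have gt: "gaps tr = map fst bs @ [0]" and ot: "outputs tr = map snd bs"
        using bs by (simp_all add: gaps_blk outputs_blk)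
      show "gaps tr ! i \<le> 4 * depth W * (adjacent_size (outputs tr) i + 1)"
      proof (cases "i < length bs")
        case True
        have gi: "gaps tr ! i = fst (bs ! i)" using gt True by (simp add: nth_append)
        have "good g (bs ! i)" using bs True by simp
        then have f: "fst (bs ! i) \<le> (2 * depth W + 2) * (card (snd (bs ! i)) + e (\<sigma> g))"
          using bnd_depth unfolding good_def by blast
        have ca: "card (snd (bs ! i)) \<le> adjacent_size (outputs tr) i"
          using True unfolding ot adjacent_size_def by simp
        have "card (snd (bs ! i)) + e (\<sigma> g) \<le> adjacent_size (outputs tr) i + 1"
          using ca e_le1[of "\<sigma> g"] by linarith
        moreover have "2 * depth W + 2 \<le> 4 * depth W" using D1 by linarith
        ultimately have "(2 * depth W + 2) * (card (snd (bs ! i)) + e (\<sigma> g))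
            \<le> 4 * depth W * (adjacent_size (outputs tr) i + 1)"
          by (intro mult_mono) simp_all
        then show ?thesis using gi f by linarith
      next
        case False
        then have "i = length bs" using i gt by simp
        then have "gaps tr ! i = 0" using gt by (simp add: nth_append)
        then show ?thesis by simp
      qed
    qed
  qed
  show "(\<exists>tr. enum_trace G W mu Svar \<sigma> ins g tr) \<and>
     (\<forall>tr. enum_trace G W mu Svar \<sigma> ins g tr \<longrightarrow>
        set (outputs tr) = captured_sets G W mu Svar g \<and>
        (\<forall>i < length (gaps tr).
           gaps tr ! i \<le> 4 * depth W * (adjacent_size (outputs tr) i + 1)))"
    using ex main by blast
qed


end
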